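(* Let an instance of $\mathrm{MaxTotal}$ in the $k$R-model be given (as defined in the context), in which every conflict range has positive length. Let $E$ be the ordered set of all conflict events together with $0$ and $2\pi$, and for $j\in\{0,\dots,|E|-2\}$ let $E[j]$ be the interval between the $j$-th and $(j+1)$-th element of $E$ (indices modulo $|E|-1$). Consider the integer linear program with binary variables $x_i^j,b_i^j$ for each label $\ell_i\in L$ and each $j\in\{0,\dots,|E|-2\}$, with constraints $x_i^j-b_i^j\le x_i^{j-1}$ for all $\ell_i\in L$ and all $j$; $\sum_{0\le j\le |E|-2} b_i^j\le k$ for all $\ell_i\in L$; $x_i^j+x_m^j\le 1$ for every pair of labels $\ell_i,\ell_m$ and every $j$ such that $\ell_i$ and $\ell_m$ are in conflict during $E[j]$; and objective to maximize $\sum_{\ell_i\in L}\sum_{0\le j\le|E|-2} x_i^j\,|E[j]|$. Then an optimal solution of this ILP, interpreted as the labeling in which $\ell_i$ is active during $E[j]$ iff $x_i^j=1$, is an optimal solution of $\mathrm{MaxTotal}$. The ILP has at most $O(e\cdot n)$ variables and $O(c\cdot e\cdot n)$ constraints, where $n$ is the number of labels, $e$ the number of conflict events, and $c$ the maximum number of conflicts per label.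
   Context: Input: a set $P=\{p_1,\dots,p_n\}$ of points in the plane and a set $L=\{\ell_1,\dots,\ell_n\}$ of pairwise disjoint, closed, axis-aligned rectangular labels, where $p_i$ coincides with a corner (the anchor) of $\ell_i$. Angles are taken modulo $2\pi$; for $a,b\in[0,2\pi]$, $[a,b]$ is the usual interval if $a\le b$ and $[a,2\pi]\cup[0,b]$ otherwise, with length $b-a$ resp. $2\pi-a+b$. For $\alpha\in[0,2\pi)$, $L(\alpha)$ is the set of labels each rotated by $\alpha$ around its anchor. A rotation labeling $\phi:L\times[0,2\pi)\to\{0,1\}$ is valid if for each $\alpha$ the active labels in $L(\alpha)$ are pairwise disjoint. Two labels are in conflict at $\alpha$ if they intersect in $L(\alpha)$; the maximal contiguous ranges of the set of such $\alpha$ are conflict ranges, and their endpoints are conflict events. An active range of a label is a maximal interval on which it is active. The total activity $t(\phi)$ is the sum over all labels of the lengths of their active ranges. $\mathrm{MaxTotal}$ in the $k$R-model: find a valid labeling in which each label has at most $k$ active ranges, maximizing $t(\phi)$. *)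

theory Defs
  imports "HOL-Analysis.Analysis"
begin

(* Points of the plane are complex numbers; rotation by alpha about c is z |-> c + cis alpha * (z - c).
   An instance consists of n labels indexed by 0..n-1: anchors p i and label sets lab i. *)

definition rect :: "real \<Rightarrow> real \<Rightarrow> real \<Rightarrow> real \<Rightarrow> complex set" where
  "rect x0 x1 y0 y1 = {z. x0 \<le> Re z \<and> Re z \<le> x1 \<and> y0 \<le> Im z \<and> Im z \<le> y1}"

definition rotate_about :: "complex \<Rightarrow> real \<Rightarrow> complex set \<Rightarrow> complex set" where
  "rotate_about c \<alpha> S = (\<lambda>z. c + cis \<alpha> * (z - c)) ` S"

definition label_instance :: "nat \<Rightarrow> (nat \<Rightarrow> complex) \<Rightarrow> (nat \<Rightarrow> complex set) \<Rightarrow> bool" where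
  "label_instance n p lab \<longleftrightarrow>
     (\<forall>i<n. \<exists>x0 x1 y0 y1. x0 < x1 \<and> y0 < y1 \<and> lab i = rect x0 x1 y0 y1 \<and>
         p i \<in> {Complex x0 y0, Complex x0 y1, Complex x1 y0, Complex x1 y1}) \<and>
     (\<forall>i<n. \<forall>m<n. i \<noteq> m \<longrightarrow> lab i \<inter> lab m = {})"

definition in_conflict :: "(nat \<Rightarrow> complex) \<Rightarrow> (nat \<Rightarrow> complex set) \<Rightarrow> nat \<Rightarrow> nat \<Rightarrow> real \<Rightarrow> bool" where
  "in_conflict p lab i m \<alpha> \<longleftrightarrow>
     i \<noteq> m \<and> rotate_about (p i) \<alpha> (lab i) \<inter> rotate_about (p m) \<alpha> (lab m) \<noteq> {}"

text \<open>Conflict ranges: maximal contiguous ranges of the (2pi-periodic) set of conflict angles,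
  lifted to the real line.\<close>
definition conflict_ranges :: "(nat \<Rightarrow> complex) \<Rightarrow> (nat \<Rightarrow> complex set) \<Rightarrow> nat \<Rightarrow> nat \<Rightarrow> real set set" where
  "conflict_ranges p lab i m = components {\<alpha>. in_conflict p lab i m \<alpha>}"

definition conflict_events :: "nat \<Rightarrow> (nat \<Rightarrow> complex) \<Rightarrow> (nat \<Rightarrow> complex set) \<Rightarrow> real set" where
  "conflict_events n p lab =
     {\<alpha> \<in> {0..<2*pi}. \<exists>i<n. \<exists>m<n. \<exists>C \<in> conflict_ranges p lab i m. \<alpha> \<in> frontier C}"

definition event_list :: "nat \<Rightarrow> (nat \<Rightarrow> complex) \<Rightarrow> (nat \<Rightarrow> complex set) \<Rightarrow> real list" where
  "event_list n p lab = sorted_list_of_set (insert 0 (insert (2*pi) (conflict_events n p lab)))"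

definition num_intervals :: "nat \<Rightarrow> (nat \<Rightarrow> complex) \<Rightarrow> (nat \<Rightarrow> complex set) \<Rightarrow> nat" where
  "num_intervals n p lab = length (event_list n p lab) - 1"

definition conflict_during :: "nat \<Rightarrow> (nat \<Rightarrow> complex) \<Rightarrow> (nat \<Rightarrow> complex set) \<Rightarrow> nat \<Rightarrow> nat \<Rightarrow> nat \<Rightarrow> bool" where
  "conflict_during n p lab i m j \<longleftrightarrow>
     (\<exists>\<alpha>. event_list n p lab ! j < \<alpha> \<and> \<alpha> < event_list n p lab ! (j+1) \<and> in_conflict p lab i m \<alpha>)"

text \<open>A rotation labeling phi : L x [0,2pi) -> {0,1}; only values on [0,2pi) matter.\<close>
definition valid_labeling :: "nat \<Rightarrow> (nat \<Rightarrow> complex) \<Rightarrow> (nat \<Rightarrow> complex set) \<Rightarrow> (nat \<Rightarrow> real \<Rightarrow> bool) \<Rightarrow> bool" where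
  "valid_labeling n p lab \<phi> \<longleftrightarrow>
     (\<forall>\<alpha> \<in> {0..<2*pi}. \<forall>i<n. \<forall>m<n. i \<noteq> m \<longrightarrow> \<phi> i \<alpha> \<longrightarrow> \<phi> m \<alpha> \<longrightarrow>
        rotate_about (p i) \<alpha> (lab i) \<inter> rotate_about (p m) \<alpha> (lab m) = {})"

definition active_ranges :: "(nat \<Rightarrow> real \<Rightarrow> bool) \<Rightarrow> nat \<Rightarrow> complex set set" where
  "active_ranges \<phi> i = components (cis ` {\<alpha> \<in> {0..<2*pi}. \<phi> i \<alpha>})"

definition range_length :: "complex set \<Rightarrow> real" where
  "range_length C = measure lebesgue {\<alpha> \<in> {0..<2*pi}. cis \<alpha> \<in> C}"

definition total_activity :: "nat \<Rightarrow> (nat \<Rightarrow> real \<Rightarrow> bool) \<Rightarrow> real" where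
  "total_activity n \<phi> = (\<Sum>i<n. \<Sum>C \<in> active_ranges \<phi> i. range_length C)"

definition kR_feasible :: "nat \<Rightarrow> (nat \<Rightarrow> complex) \<Rightarrow> (nat \<Rightarrow> complex set) \<Rightarrow> nat \<Rightarrow> (nat \<Rightarrow> real \<Rightarrow> bool) \<Rightarrow> bool" where
  "kR_feasible n p lab k \<phi> \<longleftrightarrow>
     valid_labeling n p lab \<phi> \<and> (\<forall>i<n. finite (active_ranges \<phi> i) \<and> card (active_ranges \<phi> i) \<le> k)"

definition maxtotal_optimal :: "nat \<Rightarrow> (nat \<Rightarrow> complex) \<Rightarrow> (nat \<Rightarrow> complex set) \<Rightarrow> nat \<Rightarrow> (nat \<Rightarrow> real \<Rightarrow> bool) \<Rightarrow> bool" where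
  "maxtotal_optimal n p lab k \<phi> \<longleftrightarrow>
     kR_feasible n p lab k \<phi> \<and>
     (\<forall>\<psi>. kR_feasible n p lab k \<psi> \<longrightarrow> total_activity n \<psi> \<le> total_activity n \<phi>)"

definition ilp_feasible :: "nat \<Rightarrow> (nat \<Rightarrow> complex) \<Rightarrow> (nat \<Rightarrow> complex set) \<Rightarrow> nat \<Rightarrow>
    (nat \<Rightarrow> nat \<Rightarrow> int) \<Rightarrow> (nat \<Rightarrow> nat \<Rightarrow> int) \<Rightarrow> bool" where
  "ilp_feasible n p lab k x b \<longleftrightarrow>
     (let N = num_intervals n p lab in
       (\<forall>i<n. \<forall>j<N. x i j \<in> {0,1} \<and> b i j \<in> {0,1}) \<and>
       (\<forall>i<n. \<forall>j<N. x i j - b i j \<le> x i ((j + N - 1) mod N)) \<and>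
       (\<forall>i<n. (\<Sum>j<N. b i j) \<le> int k) \<and>
       (\<forall>i<n. \<forall>m<n. \<forall>j<N. i \<noteq> m \<longrightarrow> conflict_during n p lab i m j \<longrightarrow> x i j + x m j \<le> 1))"

definition ilp_objective :: "nat \<Rightarrow> (nat \<Rightarrow> complex) \<Rightarrow> (nat \<Rightarrow> complex set) \<Rightarrow> (nat \<Rightarrow> nat \<Rightarrow> int) \<Rightarrow> real" where
  "ilp_objective n p lab x =
     (\<Sum>i<n. \<Sum>j<num_intervals n p lab.
        of_int (x i j) * (event_list n p lab ! (j+1) - event_list n p lab ! j))"

definition ilp_optimal :: "nat \<Rightarrow> (nat \<Rightarrow> complex) \<Rightarrow> (nat \<Rightarrow> complex set) \<Rightarrow> nat \<Rightarrow>
    (nat \<Rightarrow> nat \<Rightarrow> int) \<Rightarrow> (nat \<Rightarrow> nat \<Rightarrow> int) \<Rightarrow> bool" where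
  "ilp_optimal n p lab k x b \<longleftrightarrow>
     ilp_feasible n p lab k x b \<and>
     (\<forall>x' b'. ilp_feasible n p lab k x' b' \<longrightarrow> ilp_objective n p lab x' \<le> ilp_objective n p lab x)"

definition ilp_num_variables :: "nat \<Rightarrow> (nat \<Rightarrow> complex) \<Rightarrow> (nat \<Rightarrow> complex set) \<Rightarrow> nat" where
  "ilp_num_variables n p lab = 2 * n * num_intervals n p lab"

definition ilp_num_constraints :: "nat \<Rightarrow> (nat \<Rightarrow> complex) \<Rightarrow> (nat \<Rightarrow> complex set) \<Rightarrow> nat" where
  "ilp_num_constraints n p lab =
     n * num_intervals n p lab + n +
     card {(i, m, j). i < m \<and> m < n \<and> j < num_intervals n p lab \<and> conflict_during n p lab i m j}"

definition max_conflicts :: "nat \<Rightarrow> (nat \<Rightarrow> complex) \<Rightarrow> (nat \<Rightarrow> complex set) \<Rightarrow> nat" where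
  "max_conflicts n p lab =
     Max (insert 0 ((\<lambda>i. card {m. m < n \<and> (\<exists>\<alpha>. in_conflict p lab i m \<alpha>)}) ` {..<n}))"

end

theory Submission
  imports Defs
begin


lemma cis_inj02:
  assumes "0 \<le> a" "a < 2*pi" "0 \<le> b" "b < 2*pi" "cis a = cis b"
  shows "a = b"
proof -
  have "Arg2pi (cis a) = a" using assms(1,2) by (simp add: cis_conv_exp Arg2pi_exp)
  moreover have "Arg2pi (cis b) = b" using assms(3,4) by (simp add: cis_conv_exp Arg2pi_exp)
  ultimately show ?thesis using assms(5) by metis
qed

lemma cis_2pi_shift: "cis (t + 2*pi) = cis t"
  by (simp add: cis.ctr sin_add cos_add)

lemma cis_2pi_shift': "cis (t - 2*pi) = cis t"
  using cis_2pi_shift[of "t - 2*pi"] by simp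

lemma finite_null_lebesgue: "finite (F::real set) \<Longrightarrow> F \<in> null_sets lebesgue"
  by (induction F rule: finite_induct) auto

lemma arc_interval:
  assumes C: "connected C" "C \<subseteq> sphere 0 1" "cis \<beta> \<notin> C"
  shows "is_interval {t \<in> {\<beta><..<\<beta>+2*pi}. cis t \<in> C}"
proof -
  define h where "h z = \<beta> + Arg2pi (z / cis \<beta>)" for z
  have hc: "h (cis t) = t" if "\<beta> < t" "t < \<beta> + 2*pi" for t
  proof -
    have "cis t / cis \<beta> = exp (\<i> * complex_of_real (t - \<beta>))"
      using cis_divide[of t \<beta>] cis_conv_exp[of "t - \<beta>"] by simp
    then show ?thesis using that by (simp add: h_def Arg2pi_exp)
  qed
  have hz: "\<beta> < h z \<and> h z < \<beta> + 2*pi \<and> cis (h z) = z \<and> z / cis \<beta> \<notin> \<real>\<^sub>\<ge>\<^sub>0" if "z \<in> C" for z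
  proof -
    define w where "w = z / cis \<beta>"
    have nz: "norm z = 1" using that C by auto
    have nw: "norm w = 1" using nz by (simp add: w_def norm_divide)
    have w1: "w \<noteq> 1" using that C(3) by (auto simp: w_def)
    have wnn: "w \<notin> \<real>\<^sub>\<ge>\<^sub>0"
    proof
      assume "w \<in> \<real>\<^sub>\<ge>\<^sub>0"
      then obtain r where "w = of_real r" "r \<ge> 0" by (auto simp: complex_nonneg_Reals_iff complex_eq_iff)
      with nw w1 show False by auto
    qed
    have a0: "Arg2pi w \<noteq> 0" using wnn by (auto simp: Arg2pi_eq_0 complex_nonneg_Reals_iff complex_is_Real_iff)
    have "exp (\<i> * of_real (Arg2pi w)) = w" using nw complex_norm_eq_1_exp by blast
    then have "cis (h z) = z"
      by (simp add: h_def w_def cis_mult[symmetric] cis_conv_exp[symmetric])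
    moreover have "0 \<le> Arg2pi w" "Arg2pi w < 2*pi" using Arg2pi by auto
    ultimately show ?thesis using a0 wnn by (auto simp: h_def w_def)
  qed
  have cont: "continuous_on C h"
  proof (rule continuous_at_imp_continuous_on, intro ballI)
    fix z assume "z \<in> C"
    then have "z / cis \<beta> \<notin> \<real>\<^sub>\<ge>\<^sub>0" using hz by blast
    then have "continuous (at (z / cis \<beta>)) Arg2pi" by (rule continuous_at_Arg2pi)
    then have "continuous (at z) (\<lambda>z. Arg2pi (z / cis \<beta>))"
      by (intro continuous_at_compose[unfolded o_def, where f="\<lambda>z. z / cis \<beta>" and g=Arg2pi]) (auto intro!: continuous_intros)
    then show "continuous (at z) h" unfolding h_def by (intro continuous_intros)
  qed
  have eq: "{t \<in> {\<beta><..<\<beta>+2*pi}. cis t \<in> C} = h ` C"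
  proof
    show "{t \<in> {\<beta><..<\<beta>+2*pi}. cis t \<in> C} \<subseteq> h ` C"
      using hc by (auto intro!: image_eqI)
    show "h ` C \<subseteq> {t \<in> {\<beta><..<\<beta>+2*pi}. cis t \<in> C}"
      using hz by auto
  qed
  show ?thesis unfolding eq is_interval_connected_1
    by (rule connected_continuous_image[OF cont C(1)])
qed

lemma arc_sep:
  assumes C: "connected C" "C \<subseteq> sphere 0 1"
    and t: "t1 < t2" "t2 < t3" "t3 < t4" "t4 < t1 + 2*pi"
    and c: "cis t1 \<in> C" "cis t3 \<in> C"
  shows "cis t2 \<in> C \<or> cis t4 \<in> C"
proof (rule ccontr)
  assume "\<not> ?thesis"
  then have n2: "cis t2 \<notin> C" and n4: "cis (t4 - 2*pi) \<notin> C" by (auto simp: cis_2pi_shift')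
  have I: "is_interval {t \<in> {t4 - 2*pi<..<t4 - 2*pi+2*pi}. cis t \<in> C}"
    by (rule arc_interval[OF C n4])
  have "t1 \<in> {t \<in> {t4 - 2*pi<..<t4 - 2*pi+2*pi}. cis t \<in> C}" "t3 \<in> {t \<in> {t4 - 2*pi<..<t4 - 2*pi+2*pi}. cis t \<in> C}"
    using t c by auto
  then have "t2 \<in> {t \<in> {t4 - 2*pi<..<t4 - 2*pi+2*pi}. cis t \<in> C}"
    using I t unfolding is_interval_1 by (meson less_imp_le)
  with n2 show False by auto
qed

lemma preimage_borel:
  assumes C: "connected C" "C \<subseteq> sphere 0 1"
  shows "{\<alpha> \<in> {0..<2*pi}. cis \<alpha> \<in> C} \<in> sets borel"
proof (cases "\<forall>\<alpha>\<in>{0..<2*pi}. cis \<alpha> \<in> C")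
  case True
  then have "{\<alpha> \<in> {0..<2*pi}. cis \<alpha> \<in> C} = {0..<2*pi}" by auto
  then show ?thesis by simp
next
  case False
  then obtain \<beta> where b: "0 \<le> \<beta>" "\<beta> < 2*pi" "cis \<beta> \<notin> C" by auto
  define I where "I = {t \<in> {\<beta><..<\<beta>+2*pi}. cis t \<in> C}"
  have I: "is_interval I" unfolding I_def by (rule arc_interval[OF C b(3)])
  have eq: "{\<alpha> \<in> {0..<2*pi}. cis \<alpha> \<in> C} = (I \<inter> {\<beta><..<2*pi}) \<union> ({0..<\<beta>} \<inter> {t. t + 2*pi \<in> I})"
  proof (intro set_eqI iffI)
    fix a assume a: "a \<in> {\<alpha> \<in> {0..<2*pi}. cis \<alpha> \<in> C}"
    show "a \<in> (I \<inter> {\<beta><..<2*pi}) \<union> ({0..<\<beta>} \<inter> {t. t + 2*pi \<in> I})"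
    proof (cases "\<beta> < a")
      case True then show ?thesis using a b by (auto simp: I_def)
    next
      case False
      then have "a \<noteq> \<beta>" using a b by auto
      with False show ?thesis using a b by (auto simp: I_def cis_2pi_shift)
    qed
  next
    fix a assume "a \<in> (I \<inter> {\<beta><..<2*pi}) \<union> ({0..<\<beta>} \<inter> {t. t + 2*pi \<in> I})"
    then show "a \<in> {\<alpha> \<in> {0..<2*pi}. cis \<alpha> \<in> C}" using b by (auto simp: I_def cis_2pi_shift)
  qed
  have i1: "is_interval (I \<inter> {\<beta><..<2*pi})"
    using I by (auto simp: is_interval_1)
  have i2: "is_interval ({0..<\<beta>} \<inter> {t. t + 2*pi \<in> I})"
    using I unfolding is_interval_1 by (auto; meson add_le_cancel_right)
  show ?thesis unfolding eq
    using real_interval_borel_measurable[OF i1] real_interval_borel_measurable[OF i2] by auto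
qed



locale inst =
  fixes n :: nat and p :: "nat \<Rightarrow> complex" and lab :: "nat \<Rightarrow> complex set"
  assumes fin: "finite (conflict_events n p lab)"
begin

abbreviation "Ev \<equiv> conflict_events n p lab"
abbreviation "E \<equiv> event_list n p lab"
abbreviation "N \<equiv> num_intervals n p lab"
definition "ES = insert 0 (insert (2*pi) Ev)"
definition "I j = {E!j<..<E!(j+1)}"

lemma Ev_sub: "Ev \<subseteq> {0..<2*pi}"
  unfolding conflict_events_def by auto

lemma ES_fin: "finite ES" using fin by (simp add: ES_def)

lemma E_def': "E = sorted_list_of_set ES" by (simp add: event_list_def ES_def)

lemma set_E: "set E = ES" using ES_fin by (simp add: E_def')

lemma E_sorted: "sorted_wrt (<) E" by (simp add: E_def')

lemma len_E: "length E = card ES" by (simp add: E_def')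

lemma card_ES: "card ES \<ge> 2"
proof -
  have "{0, 2*pi} \<subseteq> ES" by (auto simp: ES_def)
  then have "card {0::real, 2*pi} \<le> card ES" using ES_fin by (rule card_mono[rotated])
  then show ?thesis by simp
qed

lemma N_eq: "N = length E - 1" by (simp add: num_intervals_def)

lemma N_pos: "N \<ge> 1" using card_ES len_E N_eq by simp

lemma len_E': "length E = N + 1" using N_eq N_pos by simp

lemma E_mono: "i < j \<Longrightarrow> j \<le> N \<Longrightarrow> E!i < E!j"
  using sorted_wrt_nth_less[OF E_sorted, of i j] len_E' by simp

lemma E_mono_le: "i \<le> j \<Longrightarrow> j \<le> N \<Longrightarrow> E!i \<le> E!j"
  using E_mono[of i j] by (cases "i = j") auto

lemma E_mono_iff: "i \<le> N \<Longrightarrow> j \<le> N \<Longrightarrow> E!i < E!j \<longleftrightarrow> i < j"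
  using E_mono[of i j] E_mono[of j i] by (metis linorder_neqE_nat not_less_iff_gr_or_eq)

lemma E_in: "j \<le> N \<Longrightarrow> E!j \<in> ES"
  using set_E len_E' by (metis less_Suc_eq_le nth_mem Suc_eq_plus1)

lemma ES_range: "ES \<subseteq> {0..2*pi}" using Ev_sub by (auto simp: ES_def)

lemma E_ex: "e \<in> ES \<Longrightarrow> \<exists>j\<le>N. E!j = e"
  using set_E len_E' by (metis in_set_conv_nth less_Suc_eq_le Suc_eq_plus1)

lemma E0: "E!0 = 0"
proof -
  obtain j where j: "j \<le> N" "E!j = 0" using E_ex[of 0] by (auto simp: ES_def)
  have "E!0 \<ge> 0" using E_in[of 0] ES_range by auto
  moreover have "E!0 \<le> E!j" using E_mono_le[of 0 j] j by auto
  ultimately show ?thesis using j by auto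
qed

lemma EN: "E!N = 2*pi"
proof -
  obtain j where j: "j \<le> N" "E!j = 2*pi" using E_ex[of "2*pi"] by (auto simp: ES_def)
  have "E!N \<le> 2*pi" using E_in[of N] ES_range by auto
  moreover have "E!j \<le> E!N" using E_mono_le[of j N] j by auto
  ultimately show ?thesis using j by auto
qed

lemma E_range: "j \<le> N \<Longrightarrow> 0 \<le> E!j \<and> E!j \<le> 2*pi"
  using E_in[of j] ES_range by auto

lemma E_inj: "i \<le> N \<Longrightarrow> j \<le> N \<Longrightarrow> E!i = E!j \<Longrightarrow> i = j"
  using E_mono by (metis linorder_neqE_nat less_irrefl)

lemma no_event_in_I: "j < N \<Longrightarrow> e \<in> ES \<Longrightarrow> e \<notin> I j"
proof
  assume j: "j < N" and e: "e \<in> ES" "e \<in> I j"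
  obtain k where k: "k \<le> N" "E!k = e" using E_ex e by blast
  have "j < k" using e k j E_mono_iff[of j k] by (auto simp: I_def)
  moreover have "k < j+1" using e k j E_mono_iff[of k "j+1"] by (auto simp: I_def)
  ultimately show False by simp
qed

lemma I_sub: "j < N \<Longrightarrow> I j \<subseteq> {0<..<2*pi}"
  using E_range[of j] E_range[of "j+1"] by (auto simp: I_def)

lemma I_disj: "j < N \<Longrightarrow> j' < N \<Longrightarrow> t \<in> I j \<Longrightarrow> t \<in> I j' \<Longrightarrow> j = j'"
proof (rule ccontr)
  assume a: "j < N" "j' < N" "t \<in> I j" "t \<in> I j'" "j \<noteq> j'"
  show False
  proof (cases "j < j'")
    case True
    then have "E!(j+1) \<le> E!j'" using E_mono_le a by auto
    then show False using a by (auto simp: I_def)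
  next
    case False
    then have "E!(j'+1) \<le> E!j" using E_mono_le a by auto
    then show False using a by (auto simp: I_def)
  qed
qed

lemma locate: "0 \<le> t \<Longrightarrow> t < 2*pi \<Longrightarrow> \<exists>j<N. E!j \<le> t \<and> t < E!(j+1)"
proof -
  assume t: "0 \<le> t" "t < 2*pi"
  define j where "j = (GREATEST j. j \<le> N \<and> E!j \<le> t)"
  have ex: "0 \<le> N \<and> E!0 \<le> t" using t E0 by simp
  have jp: "j \<le> N \<and> E!j \<le> t" unfolding j_def
    by (rule GreatestI_ex_nat[where b=N]) (use ex in auto)
  have jmax: "\<And>k. k \<le> N \<and> E!k \<le> t \<Longrightarrow> k \<le> j" unfolding j_def
    by (rule Greatest_le_nat[where b=N]) auto
  have "j \<noteq> N" using jp EN t by auto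
  then have jN: "j < N" using jp by simp
  have "\<not> E!(j+1) \<le> t" using jmax[of "j+1"] jN by auto
  then show ?thesis using jN jp by auto
qed

lemma locate_ev: "0 \<le> t \<Longrightarrow> t < 2*pi \<Longrightarrow> \<exists>j<N. t = E!j \<or> t \<in> I j"
proof -
  assume "0 \<le> t" "t < 2*pi"
  then obtain j where "j<N" "E!j \<le> t" "t < E!(j+1)" using locate by blast
  then show ?thesis unfolding I_def by (intro exI[of _ j]) auto
qed

lemma I_L: "j < N \<Longrightarrow> measure lebesgue (I j) = E!(j+1) - E!j"
  using E_mono[of j "j+1"] by (simp add: I_def)

lemma prev_lt: "j < N \<Longrightarrow> (j + N - 1) mod N < N"
  using N_pos by simp

lemma measure_split:
  assumes A: "A \<subseteq> {0..<2*pi}" "A \<in> sets lebesgue"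
  shows "measure lebesgue A = (\<Sum>j<N. measure lebesgue (A \<inter> I j))"
proof -
  have null: "ES \<in> null_sets lebesgue" using ES_fin by (rule finite_null_lebesgue)
  have "measure lebesgue A = measure lebesgue (A - ES)"
    using measure_Diff_null_set[OF A(2) null] by simp
  also have "A - ES = (\<Union>j\<in>{..<N}. A \<inter> I j)"
  proof (intro set_eqI iffI)
    fix t assume t: "t \<in> A - ES"
    then have "0 \<le> t" "t < 2*pi" using A by auto
    then obtain j where "j < N" "t = E!j \<or> t \<in> I j" using locate_ev[of t] by blast
    moreover have "E!j \<in> ES" using E_in \<open>j < N\<close> by simp
    ultimately show "t \<in> (\<Union>j\<in>{..<N}. A \<inter> I j)" using t by auto
  next
    fix t assume "t \<in> (\<Union>j\<in>{..<N}. A \<inter> I j)"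
    then show "t \<in> A - ES" using no_event_in_I by auto
  qed
  also have "measure lebesgue (\<Union>j\<in>{..<N}. A \<inter> I j) = (\<Sum>j<N. measure lebesgue (A \<inter> I j))"
  proof (rule measure_finite_Union)
    show "(\<lambda>j. A \<inter> I j) ` {..<N} \<subseteq> sets lebesgue" using A by (auto simp: I_def)
    show "disjoint_family_on (\<lambda>j. A \<inter> I j) {..<N}"
      unfolding disjoint_family_on_def using I_disj by blast
    fix j
    have "emeasure lebesgue (A \<inter> I j) \<le> emeasure lebesgue {0..2*pi}"
      by (rule emeasure_mono) (use A in auto)
    then show "emeasure lebesgue (A \<inter> I j) \<noteq> \<infinity>"
      by (auto simp: top_unique)
  qed simp
  finally show ?thesis .
qed

lemma comp_sum:
  assumes A: "A \<subseteq> {0..<2*pi}" and finC: "finite (components (cis ` A))"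
  shows "A \<in> sets lebesgue \<and> (\<Sum>C\<in>components (cis ` A). range_length C) = measure lebesgue A"
proof -
  define P where "P C = {\<alpha> \<in> {0..<2*pi}. cis \<alpha> \<in> C}" for C
  have sph: "cis ` A \<subseteq> sphere 0 1" by auto
  have Pb: "P C \<in> sets lebesgue" if "C \<in> components (cis ` A)" for C
  proof -
    have "connected C" "C \<subseteq> sphere 0 1"
      using that in_components_connected in_components_subset sph by blast+
    then show ?thesis unfolding P_def using preimage_borel by auto
  qed
  have AU: "A = (\<Union>C\<in>components (cis ` A). P C)"
  proof (intro set_eqI iffI)
    fix a assume a: "a \<in> A"
    then have "cis a \<in> \<Union>(components (cis ` A))" unfolding Union_components by simp
    then obtain C where "C \<in> components (cis ` A)" "cis a \<in> C" by blast
    then show "a \<in> (\<Union>C\<in>components (cis ` A). P C)" using a A by (auto simp: P_def)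
  next
    fix a assume "a \<in> (\<Union>C\<in>components (cis ` A). P C)"
    then obtain C where C: "C \<in> components (cis ` A)" "a \<in> {0..<2*pi}" "cis a \<in> C" by (auto simp: P_def)
    then have "cis a \<in> cis ` A" using in_components_subset by blast
    then obtain a' where "a' \<in> A" "cis a = cis a'" by auto
    then have "a = a'" using cis_inj02[of a a'] C A by auto
    then show "a \<in> A" using \<open>a' \<in> A\<close> by simp
  qed
  have meas: "A \<in> sets lebesgue"
    using finC Pb by (subst AU) (auto intro!: sets.finite_UN)
  have "measure lebesgue A = (\<Sum>C\<in>components (cis ` A). measure lebesgue (P C))"
  proof (subst AU, rule measure_finite_Union[OF finC])
    show "P ` components (cis ` A) \<subseteq> sets lebesgue" using Pb by auto
    show "disjoint_family_on P (components (cis ` A))"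
      unfolding disjoint_family_on_def P_def using components_nonoverlap by blast
    fix C
    have "emeasure lebesgue (P C) \<le> emeasure lebesgue {0..2*pi}"
      by (rule emeasure_mono) (auto simp: P_def)
    then show "emeasure lebesgue (P C) \<noteq> \<infinity>" by (auto simp: top_unique)
  qed
  then show ?thesis using meas by (simp add: range_length_def P_def)
qed

end


lemma sum_ind_card: "(\<Sum>i<n. (if P i then 1 else 0::real)) = real (card {i. i < (n::nat) \<and> P i})"
proof -
  have "(\<Sum>i<n. (if P i then 1 else 0::real)) = (\<Sum>i\<in>{i\<in>{..<n}. P i}. 1)"
    by (rule sum.inter_filter[symmetric]) simp
  also have "{i\<in>{..<n}. P i} = {i. i < n \<and> P i}" by auto
  finally show ?thesis by simp
qed

lemma count_bound:
  fixes A :: "nat \<Rightarrow> real set"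
  assumes ab: "a < b" and A: "\<And>i. i < n \<Longrightarrow> A i \<in> sets lebesgue"
    and M: "\<And>t. t \<in> {a<..<b} \<Longrightarrow> card {i. i < n \<and> t \<in> A i} \<le> M"
  shows "(\<Sum>i<n. measure lebesgue (A i \<inter> {a<..<b})) \<le> real M * (b - a)"
proof -
  have fin: "emeasure lebesgue (A i \<inter> {a<..<b}) < \<infinity>" for i
  proof -
    have "emeasure lebesgue (A i \<inter> {a<..<b}) \<le> emeasure lebesgue {a<..<b}"
      by (rule emeasure_mono) auto
    moreover have "emeasure lebesgue {a<..<b} = ennreal (b-a)" using ab by simp
    ultimately have "emeasure lebesgue (A i \<inter> {a<..<b}) \<le> ennreal (b-a)" by simp
    then show ?thesis unfolding infinity_ennreal_def using ennreal_less_top[of "b-a"] by (rule order.strict_trans1)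
  qed
  have int: "integrable lebesgue (indicator (A i \<inter> {a<..<b}) :: real \<Rightarrow> real)" if "i < n" for i
    using A[OF that] fin by (intro integrable_real_indicator) auto
  have int2: "integrable lebesgue (\<lambda>x. real M * (indicator {a<..<b} x :: real))"
    using ab by (intro integrable_mult_right integrable_real_indicator) (auto simp: emeasure_lborel_Ioo)
  have "(\<Sum>i<n. measure lebesgue (A i \<inter> {a<..<b})) = (\<Sum>i<n. integral\<^sup>L lebesgue (indicator (A i \<inter> {a<..<b}) :: real \<Rightarrow> real))"
    by simp
  also have "\<dots> = integral\<^sup>L lebesgue (\<lambda>x. \<Sum>i<n. indicator (A i \<inter> {a<..<b}) x :: real)"
    using int by (simp add: integral_sum)
  also have "\<dots> \<le> integral\<^sup>L lebesgue (\<lambda>x. real M * (indicator {a<..<b} x :: real))"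
  proof (rule integral_mono)
    show "integrable lebesgue (\<lambda>x. \<Sum>i<n. indicator (A i \<inter> {a<..<b}) x :: real)"
      using int by auto
    show "integrable lebesgue (\<lambda>x. real M * (indicator {a<..<b} x :: real))" by (rule int2)
    fix x :: real
    show "(\<Sum>i<n. indicator (A i \<inter> {a<..<b}) x) \<le> real M * indicator {a<..<b} x"
    proof (cases "x \<in> {a<..<b}")
      case True
      have "(\<Sum>i<n. indicator (A i \<inter> {a<..<b}) x :: real) = (\<Sum>i<n. (if x \<in> A i then 1 else 0))"
        using True by (intro sum.cong) (auto simp: indicator_def)
      also have "\<dots> = real (card {i. i < n \<and> x \<in> A i})" by (rule sum_ind_card)
      also have "\<dots> \<le> real M" using M[OF True] by simp
      finally show ?thesis using True by simp
    next
      case False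
      then have "\<And>i. indicator (A i \<inter> {a<..<b}) x = (0::real)" by (auto simp: indicator_def)
      then show ?thesis using False by simp
    qed
  qed
  also have "\<dots> = real M * (b - a)" using ab by simp
  finally show ?thesis .
qed

context inst begin

lemma in_conflict_shift: "in_conflict p lab i m (t + 2*pi) = in_conflict p lab i m t"
  by (simp add: in_conflict_def rotate_about_def cis_2pi_shift)

lemma conflict_const:
  assumes j: "j < N" and a: "\<alpha> \<in> I j" "\<alpha>' \<in> I j" and c: "in_conflict p lab i m \<alpha>'"
    and im: "i < n" "m < n"
  shows "in_conflict p lab i m \<alpha>"
proof (rule ccontr)
  assume nc: "\<not> in_conflict p lab i m \<alpha>"
  define S where "S = {\<alpha>. in_conflict p lab i m \<alpha>}"
  define C where "C = connected_component_set S \<alpha>'"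
  have CS: "C \<in> conflict_ranges p lab i m"
    unfolding C_def S_def conflict_ranges_def by (rule componentsI) (simp add: c)
  define T where "T = {min \<alpha> \<alpha>'..max \<alpha> \<alpha>'}"
  have "connected T" by (simp add: T_def)
  moreover have "T \<inter> C \<noteq> {}"
  proof -
    have "\<alpha>' \<in> C" using c by (simp add: C_def S_def)
    moreover have "\<alpha>' \<in> T" by (auto simp: T_def)
    ultimately show ?thesis by blast
  qed
  moreover have "T - C \<noteq> {}"
  proof -
    have "\<alpha> \<notin> C" using nc connected_component_subset by (fastforce simp: C_def S_def)
    moreover have "\<alpha> \<in> T" by (auto simp: T_def)
    ultimately show ?thesis by blast
  qed
  ultimately have "T \<inter> frontier C \<noteq> {}" by (rule connected_Int_frontier)
  then obtain f where f: "f \<in> T" "f \<in> frontier C" by auto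
  have fI: "f \<in> I j" using f(1) a by (auto simp: T_def I_def)
  then have "f \<in> {0..<2*pi}" using I_sub[OF j] by auto
  moreover have "\<exists>i<n. \<exists>m<n. \<exists>C\<in>conflict_ranges p lab i m. f \<in> frontier C"
    using im CS f(2) by blast
  ultimately have "f \<in> Ev" by (simp add: conflict_events_def)
  then have "f \<in> ES" by (simp add: ES_def)
  then show False using no_event_in_I[OF j] fI by blast
qed

lemma conflict_event:
  assumes pos: "\<forall>C \<in> conflict_ranges p lab i m. emeasure lebesgue C > 0"
    and j: "j < N" and c: "in_conflict p lab i m (E!j)"
  shows "conflict_during n p lab i m j \<or> conflict_during n p lab i m ((j + N - 1) mod N)"
proof -
  define e where "e = E!j"
  define S where "S = {\<alpha>. in_conflict p lab i m \<alpha>}"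
  define C where "C = connected_component_set S e"
  have CS: "C \<in> conflict_ranges p lab i m"
    unfolding C_def S_def conflict_ranges_def by (rule componentsI) (simp add: c e_def)
  have eC: "e \<in> C" using c by (simp add: C_def S_def e_def)
  have CsubS: "C \<subseteq> S" unfolding C_def by (rule connected_component_subset)
  have Cint: "is_interval C" unfolding is_interval_connected_1 C_def by simp
  have "C \<noteq> {e}"
  proof
    assume "C = {e}"
    then have "emeasure lebesgue C = 0" using finite_null_lebesgue[of "{e}"] by auto
    then show False using pos CS by auto
  qed
  then obtain c where cC: "c \<in> C" "c \<noteq> e" using eC by blast
  have inC: "t \<in> C" if "min c e \<le> t" "t \<le> max c e" for t
  proof (cases "c \<le> e")
    case True
    then show ?thesis using is_interval_1[THEN iffD1, OF Cint, rule_format, of c e t] cC eC that by simp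
  next
    case False
    then show ?thesis using is_interval_1[THEN iffD1, OF Cint, rule_format, of e c t] cC eC that by simp
  qed
  consider "c > e" | "c < e" "j > 0" | "c < e" "j = 0" using cC by linarith
  then show ?thesis
  proof cases
    case 1
    define t where "t = (e + min c (E!(j+1))) / 2"
    have em: "e < E!(j+1)" using E_mono[of j "j+1"] j by (simp add: e_def)
    have "e < t" "t < E!(j+1)" "t < c" using 1 em by (auto simp: t_def min_def)
    moreover have "t \<in> C" using inC[of t] 1 \<open>e < t\<close> \<open>t < c\<close> by simp
    then have "in_conflict p lab i m t" using CsubS by (auto simp: S_def)
    ultimately have "conflict_during n p lab i m j"
      unfolding conflict_during_def e_def by blast
    then show ?thesis by simp
  next
    case 2
    define t where "t = (max c (E!(j-1)) + e) / 2"
    have em: "E!(j-1) < e" using E_mono[of "j-1" j] j 2 by (simp add: e_def)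
    have "E!(j-1) < t" "t < e" "c < t" using 2 em by (auto simp: t_def max_def)
    moreover have "t \<in> C" using inC[of t] 2 \<open>t < e\<close> \<open>c < t\<close> by simp
    then have "in_conflict p lab i m t" using CsubS by (auto simp: S_def)
    moreover have "j - 1 + 1 = j" using 2 by simp
    ultimately have "conflict_during n p lab i m (j-1)"
      unfolding conflict_during_def e_def by (intro exI[of _ t]) simp
    moreover have "(j + N - 1) mod N = j - 1"
    proof -
      have e1: "j + N - 1 = (j - 1) + N" using 2 by simp
      have e2: "((j - 1) + N) mod N = j - 1" using j by simp
      show ?thesis by (simp only: e1 e2)
    qed
    ultimately show ?thesis by simp
  next
    case 3
    have e0: "e = 0" using 3 E0 by (simp add: e_def)
    define t where "t = (max c (E!(N-1) - 2*pi) + 0) / 2"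
    have em: "E!(N-1) < 2*pi" using E_mono[of "N-1" N] N_pos EN by simp
    have "E!(N-1) - 2*pi < t" "t < 0" "c < t" using 3 em e0 by (auto simp: t_def max_def)
    moreover have "t \<in> C" using inC[of t] 3 e0 \<open>t < 0\<close> \<open>c < t\<close> by simp
    then have "in_conflict p lab i m t" using CsubS by (auto simp: S_def)
    ultimately have "in_conflict p lab i m (t + 2*pi)" "E!(N-1) < t + 2*pi" "t + 2*pi < E!(N-1+1)"
      using in_conflict_shift EN N_pos by auto
    then have "conflict_during n p lab i m (N-1)"
      unfolding conflict_during_def by blast
    moreover have "(j + N - 1) mod N = N - 1" using 3 N_pos by simp
    ultimately show ?thesis by simp
  qed
qed

end


lemma sum_ind_card_int: "(\<Sum>i<nn. (if P i then 1 else 0::int)) = int (card {i. i < (nn::nat) \<and> P i})"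
proof -
  have "(\<Sum>i<nn. (if P i then 1 else 0::int)) = (\<Sum>i\<in>{i\<in>{..<nn}. P i}. 1)"
    by (rule sum.inter_filter[symmetric]) simp
  also have "{i\<in>{..<nn}. P i} = {i. i < nn \<and> P i}" by auto
  finally show ?thesis by simp
qed

context inst begin

lemma prv_eq: "0 < j \<Longrightarrow> j < N \<Longrightarrow> (j + N - 1) mod N = j - 1"
proof -
  assume j: "0 < j" "j < N"
  have "j + N - 1 = (j - 1) + N" using j by simp
  then have "(j + N - 1) mod N = ((j - 1) + N) mod N" by (rule arg_cong)
  also have "\<dots> = (j - 1) mod N" by (rule mod_add_self2)
  also have "\<dots> = j - 1" using j by simp
  finally show ?thesis .
qed

lemma prv_0: "(0 + N - 1) mod N = N - 1"
  using N_pos by simp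

lemma I_nonempty: "j < N \<Longrightarrow> (E!j + E!(j+1))/2 \<in> I j"
  using E_mono[of j "j+1"] by (auto simp: I_def)

lemma upper:
  assumes opt: "ilp_optimal n p lab k x b" and psi: "kR_feasible n p lab k \<psi>"
  shows "total_activity n \<psi> \<le> ilp_objective n p lab x"
proof -
  define A where "A i = {\<alpha> \<in> {0..<2*pi}. \<psi> i \<alpha>}" for i
  have AR: "active_ranges \<psi> i = components (cis ` A i)" for i
    by (simp add: active_ranges_def A_def)
  have finc: "finite (components (cis ` A i))" "card (components (cis ` A i)) \<le> k" if "i < n" for i
  proof -
    have "finite (active_ranges \<psi> i) \<and> card (active_ranges \<psi> i) \<le> k"
      using psi that unfolding kR_feasible_def by blast
    then show "finite (components (cis ` A i))" "card (components (cis ` A i)) \<le> k"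
      using AR by simp_all
  qed
  have cs: "A i \<in> sets lebesgue \<and> (\<Sum>C\<in>components (cis ` A i). range_length C) = measure lebesgue (A i)"
    if "i < n" for i
  proof -
    have "A i \<subseteq> {0..<2*pi}" by (auto simp: A_def)
    then show ?thesis using finc(1)[OF that] by (rule comp_sum)
  qed
  have tot: "total_activity n \<psi> = (\<Sum>i<n. measure lebesgue (A i))"
    unfolding total_activity_def AR using cs by (intro sum.cong) auto
  define cnt where "cnt \<alpha> = card {i. i < n \<and> \<psi> i \<alpha>}" for \<alpha>
  have ex: "\<exists>\<sigma>. j < N \<longrightarrow> \<sigma> \<in> I j \<and> (\<forall>\<alpha>\<in>I j. cnt \<alpha> \<le> cnt \<sigma>)" for j
  proof (cases "j < N")
    case True
    have "cnt \<alpha> \<le> n" for \<alpha>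
    proof -
      have "{i. i < n \<and> \<psi> i \<alpha>} \<subseteq> {..<n}" by auto
      then have "card {i. i < n \<and> \<psi> i \<alpha>} \<le> card {..<n}" by (rule card_mono[rotated]) simp
      then show ?thesis by (simp add: cnt_def)
    qed
    then have "cnt ` I j \<subseteq> {..n}" by auto
    then have f: "finite (cnt ` I j)" by (rule finite_subset) simp
    have ne: "cnt ` I j \<noteq> {}" using I_nonempty[OF True] by auto
    have "Max (cnt ` I j) \<in> cnt ` I j" using f ne by (rule Max_in)
    then obtain \<sigma> where s: "\<sigma> \<in> I j" "cnt \<sigma> = Max (cnt ` I j)" by auto
    have "\<forall>\<alpha>\<in>I j. cnt \<alpha> \<le> cnt \<sigma>" using s f by auto
    then show ?thesis using s by blast
  qed auto
  then have "\<forall>j. \<exists>\<sigma>. j < N \<longrightarrow> \<sigma> \<in> I j \<and> (\<forall>\<alpha>\<in>I j. cnt \<alpha> \<le> cnt \<sigma>)" by blast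
  then have "\<exists>\<sigma>. \<forall>j. j < N \<longrightarrow> \<sigma> j \<in> I j \<and> (\<forall>\<alpha>\<in>I j. cnt \<alpha> \<le> cnt (\<sigma> j))" by (rule choice)
  then obtain \<sigma> where \<sigma>0: "\<forall>j. j < N \<longrightarrow> \<sigma> j \<in> I j \<and> (\<forall>\<alpha>\<in>I j. cnt \<alpha> \<le> cnt (\<sigma> j))" by blast
  then have \<sigma>: "\<And>j. j < N \<Longrightarrow> \<sigma> j \<in> I j \<and> (\<forall>\<alpha>\<in>I j. cnt \<alpha> \<le> cnt (\<sigma> j))" by blast
  have \<sigma>r: "0 < \<sigma> j \<and> \<sigma> j < 2*pi" if "j < N" for j
    using \<sigma>[OF that] I_sub[OF that] by auto
  have \<sigma>mono: "\<sigma> a < \<sigma> b" if "a < b" "b < N" for a b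
  proof -
    have "\<sigma> a < E!(a+1)" using \<sigma>[of a] that by (auto simp: I_def)
    also have "E!(a+1) \<le> E!b" using E_mono_le[of "a+1" b] that by simp
    also have "E!b < \<sigma> b" using \<sigma>[of b] that by (auto simp: I_def)
    finally show ?thesis .
  qed
  have \<sigma>A: "\<psi> i (\<sigma> j)" if jN: "j < N" and cin: "cis (\<sigma> j) \<in> cis ` A i" for i j
  proof -
    obtain a where a: "a \<in> A i" "cis (\<sigma> j) = cis a" using cin by blast
    then have "\<sigma> j = a" using cis_inj02[of "\<sigma> j" a] \<sigma>r[OF jN] by (auto simp: A_def)
    then show ?thesis using a by (simp add: A_def)
  qed
  have \<sigma>A': "cis (\<sigma> j) \<in> cis ` A i" if "j < N" "\<psi> i (\<sigma> j)" for i j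
    using that \<sigma>r[OF that(1)] by (auto simp: A_def)
  define prv where "prv j = (j + N - 1) mod N" for j
  define xs where "xs i j = (if \<psi> i (\<sigma> j) then 1 else 0 :: int)" for i j
  define bs where "bs i j = (if \<psi> i (\<sigma> j) \<and> \<not> \<psi> i (\<sigma> (prv j)) then 1 else 0 :: int)" for i j
  have cntR: "card {j. j < N \<and> \<psi> i (\<sigma> j) \<and> \<not> \<psi> i (\<sigma> (prv j))} \<le> k" if i: "i < n" for i
  proof -
    define R where "R = {j. j < N \<and> \<psi> i (\<sigma> j) \<and> \<not> \<psi> i (\<sigma> (prv j))}"
    define S where "S = cis ` A i"
    define f where "f j = connected_component_set S (cis (\<sigma> j))" for j
    have neq: "f j1 \<noteq> f j2" if j: "j1 \<in> R" "j2 \<in> R" "j1 < j2" for j1 j2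
    proof
      assume feq: "f j1 = f j2"
      define C where "C = f j1"
      have Cc: "connected C" by (simp add: C_def f_def)
      have CS: "C \<subseteq> S" by (simp add: C_def f_def connected_component_subset)
      have Csph: "C \<subseteq> sphere 0 1" using CS by (auto simp: S_def)
      have c1: "cis (\<sigma> j1) \<in> C" using j \<sigma>A'[of j1 i] by (simp add: C_def f_def R_def S_def)
      have c3: "cis (\<sigma> j2) \<in> C" using j \<sigma>A'[of j2 i] feq by (simp add: C_def f_def R_def S_def)
      have j2p0: "j2 > 0" using j by auto
      have j2p: "j2 > 0" "prv j2 = j2 - 1" using j2p0 prv_eq[of j2] j by (auto simp: prv_def R_def)
      have "j2 - 1 \<noteq> j1" using j j2p by (auto simp: R_def)
      then have j12: "j1 < j2 - 1" using j by simp
      have t12: "\<sigma> j1 < \<sigma> (j2 - 1)" "\<sigma> (j2 - 1) < \<sigma> j2"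
        using \<sigma>mono j12 j by (auto simp: R_def)
      show False
      proof (cases "j1 = 0")
        case False
        then have pj1: "prv j1 = j1 - 1" using j prv_eq[of j1] by (auto simp: prv_def R_def)
        have "j1 - 1 < N" "j2 < N" using j by (auto simp: R_def)
        then have "\<sigma> j2 < \<sigma> (j1 - 1) + 2*pi" using \<sigma>r[of j2] \<sigma>r[of "j1-1"] by linarith
        moreover have "\<sigma> (j1 - 1) + 2*pi < \<sigma> j1 + 2*pi" using \<sigma>mono[of "j1-1" j1] False j by (auto simp: R_def)
        ultimately have "cis (\<sigma> (j2 - 1)) \<in> C \<or> cis (\<sigma> (j1 - 1) + 2*pi) \<in> C"
          using arc_sep[OF Cc Csph t12(1) t12(2) _ _ c1 c3] by blast
        then have "cis (\<sigma> (j2 - 1)) \<in> S \<or> cis (\<sigma> (j1 - 1)) \<in> S" using CS by (auto simp: cis_2pi_shift)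
        then have "\<psi> i (\<sigma> (j2 - 1)) \<or> \<psi> i (\<sigma> (j1 - 1))" using \<sigma>A j by (auto simp: S_def R_def)
        then show False using j j2p pj1 by (auto simp: R_def)
      next
        case True
        then have pj1: "prv j1 = N - 1" using prv_0 by (simp add: prv_def)
        have "j2 \<noteq> N - 1" using j pj1 by (auto simp: R_def)
        then have "\<sigma> j2 < \<sigma> (N - 1)" using \<sigma>mono[of j2 "N-1"] j N_pos by (auto simp: R_def)
        moreover have "\<sigma> (N - 1) < \<sigma> j1 + 2*pi" using \<sigma>r[of "N-1"] \<sigma>r[of j1] N_pos j by (auto simp: R_def)
        ultimately have "cis (\<sigma> (j2 - 1)) \<in> C \<or> cis (\<sigma> (N - 1)) \<in> C"
          using arc_sep[OF Cc Csph t12(1) t12(2) _ _ c1 c3] by blast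
        then have "cis (\<sigma> (j2 - 1)) \<in> S \<or> cis (\<sigma> (N - 1)) \<in> S" using CS by auto
        then have "\<psi> i (\<sigma> (j2 - 1)) \<or> \<psi> i (\<sigma> (N - 1))" using \<sigma>A j N_pos by (auto simp: S_def R_def)
        then show False using j j2p pj1 by (auto simp: R_def)
      qed
    qed
    have inj: "inj_on f R"
    proof (rule inj_onI)
      fix j1 j2 assume "j1 \<in> R" "j2 \<in> R" "f j1 = f j2"
      then show "j1 = j2" using neq[of j1 j2] neq[of j2 j1] by (metis linorder_neqE_nat)
    qed
    have img: "f ` R \<subseteq> components S"
      using \<sigma>A' by (auto simp: f_def R_def S_def intro!: componentsI)
    have "card R \<le> card (components S)"
      using card_inj_on_le[OF inj img] finc[OF i] by (simp add: S_def)
    then show ?thesis using finc[OF i] by (simp add: R_def S_def)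
  qed
  have feas: "ilp_feasible n p lab k xs bs"
    unfolding ilp_feasible_def Let_def
  proof (intro conjI allI impI)
    fix i j assume "i < n" "j < N"
    show "xs i j \<in> {0,1}" "bs i j \<in> {0,1}" by (auto simp: xs_def bs_def)
    show "xs i j - bs i j \<le> xs i ((j + N - 1) mod N)"
      by (auto simp: xs_def bs_def prv_def)
  next
    fix i assume i: "i < n"
    have "(\<Sum>j<N. bs i j) = int (card {j. j < N \<and> \<psi> i (\<sigma> j) \<and> \<not> \<psi> i (\<sigma> (prv j))})"
      unfolding bs_def by (rule sum_ind_card_int)
    then show "(\<Sum>j<N. bs i j) \<le> int k" using cntR[OF i] by simp
  next
    fix i m j assume im: "i < n" "m < n" "j < N" "i \<noteq> m" "conflict_during n p lab i m j"
    show "xs i j + xs m j \<le> 1"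
    proof (rule ccontr)
      assume "\<not> ?thesis"
      then have act: "\<psi> i (\<sigma> j)" "\<psi> m (\<sigma> j)" by (auto simp: xs_def split: if_splits)
      obtain \<alpha>' where a': "\<alpha>' \<in> I j" "in_conflict p lab i m \<alpha>'"
        using im(5) unfolding conflict_during_def I_def by auto
      have "in_conflict p lab i m (\<sigma> j)"
        using conflict_const[OF im(3) _ a'(1) a'(2) im(1) im(2)] \<sigma>[OF im(3)] by blast
      moreover have "\<sigma> j \<in> {0..<2*pi}" using \<sigma>r[OF im(3)] by auto
      ultimately show False
        using psi act im unfolding kR_feasible_def valid_labeling_def in_conflict_def by blast
    qed
  qed
  then have objle: "ilp_objective n p lab xs \<le> ilp_objective n p lab x"
    using opt unfolding ilp_optimal_def by blast
  have "ilp_objective n p lab xs = (\<Sum>j<N. \<Sum>i<n. of_int (xs i j) * (E!(j+1) - E!j))"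
    unfolding ilp_objective_def by (rule sum.swap)
  also have "\<dots> = (\<Sum>j<N. real (cnt (\<sigma> j)) * (E!(j+1) - E!j))"
  proof (rule sum.cong[OF refl])
    fix j
    have "(\<Sum>i<n. of_int (xs i j) * (E!(j+1) - E!j)) = (\<Sum>i<n. (if \<psi> i (\<sigma> j) then 1 else 0)) * (E!(j+1) - E!j)"
      unfolding xs_def sum_distrib_right by (intro sum.cong refl) simp
    also have "\<dots> = real (cnt (\<sigma> j)) * (E!(j+1) - E!j)" by (simp add: sum_ind_card cnt_def)
    finally show "(\<Sum>i<n. of_int (xs i j) * (E!(j+1) - E!j)) = real (cnt (\<sigma> j)) * (E!(j+1) - E!j)" .
  qed
  finally have objxs: "ilp_objective n p lab xs = (\<Sum>j<N. real (cnt (\<sigma> j)) * (E!(j+1) - E!j))" .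
  have "total_activity n \<psi> = (\<Sum>i<n. \<Sum>j<N. measure lebesgue (A i \<inter> I j))"
    unfolding tot using cs by (intro sum.cong refl measure_split) (auto simp: A_def)
  also have "\<dots> = (\<Sum>j<N. \<Sum>i<n. measure lebesgue (A i \<inter> I j))" by (rule sum.swap)
  also have "\<dots> \<le> (\<Sum>j<N. real (cnt (\<sigma> j)) * (E!(j+1) - E!j))"
  proof (rule sum_mono)
    fix j assume j: "j \<in> {..<N}"
    show "(\<Sum>i<n. measure lebesgue (A i \<inter> I j)) \<le> real (cnt (\<sigma> j)) * (E!(j+1) - E!j)"
      unfolding I_def
    proof (rule count_bound)
      show "E!j < E!(j+1)" using E_mono[of j "j+1"] j by simp
      show "A i \<in> sets lebesgue" if "i < n" for i using cs that by blast
      fix t assume t: "t \<in> {E!j<..<E!(j+1)}"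
      then have "t \<in> {0..<2*pi}" using I_sub[of j] j by (auto simp: I_def)
      then have "{i. i < n \<and> t \<in> A i} = {i. i < n \<and> \<psi> i t}" by (auto simp: A_def)
      then show "card {i. i < n \<and> t \<in> A i} \<le> cnt (\<sigma> j)"
        using \<sigma>[of j] j t by (auto simp: cnt_def I_def)
    qed
  qed
  finally show ?thesis using objxs objle by simp
qed

end


context inst begin

lemma ev_notin_I: "j < N \<Longrightarrow> j' \<le> N \<Longrightarrow> E!j' \<notin> I j"
  using no_event_in_I E_in by blast

lemma cis_sphere: "cis ` {0..<2*pi} = sphere 0 1"
proof
  show "cis ` {0..<2*pi} \<subseteq> sphere 0 1" by auto
  show "sphere 0 1 \<subseteq> cis ` {0..<2*pi}"
  proof
    fix z :: complex assume "z \<in> sphere 0 1"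
    then have "norm z = 1" by simp
    then have "exp (\<i> * of_real (Arg2pi z)) = z" using complex_norm_eq_1_exp by blast
    then have "cis (Arg2pi z) = z" by (simp add: cis_conv_exp)
    moreover have "Arg2pi z \<in> {0..<2*pi}" using Arg2pi[of z] by auto
    ultimately show "z \<in> cis ` {0..<2*pi}" by (metis image_eqI)
  qed
qed

lemma lower:
  assumes feas: "ilp_feasible n p lab k x b"
    and pos: "\<forall>i<n. \<forall>m<n. \<forall>C \<in> conflict_ranges p lab i m. emeasure lebesgue C > 0"
    and k1: "k \<ge> 1"
  shows "\<exists>\<phi>. kR_feasible n p lab k \<phi> \<and> total_activity n \<phi> = ilp_objective n p lab x \<and>
            (\<forall>i<n. \<forall>j<N. \<forall>\<alpha>. E!j < \<alpha> \<and> \<alpha> < E!(j+1) \<longrightarrow> (\<phi> i \<alpha> \<longleftrightarrow> x i j = 1))"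
proof -
  define prv where "prv j = (j + N - 1) mod N" for j
  have prvN: "j < N \<Longrightarrow> prv j < N" for j using N_pos by (simp add: prv_def)
  have prv1: "0 < j \<Longrightarrow> j < N \<Longrightarrow> prv j = j - 1" for j using prv_eq by (simp add: prv_def)
  have prv0: "prv 0 = N - 1" using prv_0 by (simp add: prv_def)
  have F: "(\<forall>i<n. \<forall>j<N. x i j \<in> {0,1} \<and> b i j \<in> {0,1}) \<and>
       (\<forall>i<n. \<forall>j<N. x i j - b i j \<le> x i (prv j)) \<and>
       (\<forall>i<n. (\<Sum>j<N. b i j) \<le> int k) \<and>
       (\<forall>i<n. \<forall>m<n. \<forall>j<N. i \<noteq> m \<longrightarrow> conflict_during n p lab i m j \<longrightarrow> x i j + x m j \<le> 1)"
    using feas unfolding ilp_feasible_def Let_def prv_def by blast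
  have bin: "x i j = 0 \<or> x i j = 1" "b i j = 0 \<or> b i j = 1" if "i < n" "j < N" for i j
    using F that by auto
  define \<phi> where "\<phi> i \<alpha> = ((\<exists>j<N. \<alpha> \<in> I j \<and> x i j = 1) \<or> (\<exists>j<N. \<alpha> = E!j \<and> x i j = 1 \<and> x i (prv j) = 1))" for i \<alpha>
  have corr: "\<phi> i \<alpha> \<longleftrightarrow> x i j = 1" if "j < N" "\<alpha> \<in> I j" for i j \<alpha>
  proof
    assume "\<phi> i \<alpha>"
    then show "x i j = 1" unfolding \<phi>_def using that I_disj ev_notin_I by fastforce
  next
    assume "x i j = 1" then show "\<phi> i \<alpha>" unfolding \<phi>_def using that by blast
  qed
  have phiev: "\<phi> i (E!j) \<longleftrightarrow> x i j = 1 \<and> x i (prv j) = 1" if "j < N" for i j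
  proof
    assume "\<phi> i (E!j)"
    then show "x i j = 1 \<and> x i (prv j) = 1" unfolding \<phi>_def using that ev_notin_I E_inj
      by (metis less_imp_le_nat)
  next
    assume "x i j = 1 \<and> x i (prv j) = 1" then show "\<phi> i (E!j)" unfolding \<phi>_def using that by blast
  qed
  have valid: "valid_labeling n p lab \<phi>"
    unfolding valid_labeling_def
  proof (intro ballI allI impI)
    fix \<alpha> i m assume a: "\<alpha> \<in> {0..<2*pi}" and im: "i < n" "m < n" "i \<noteq> m" "\<phi> i \<alpha>" "\<phi> m \<alpha>"
    show "rotate_about (p i) \<alpha> (lab i) \<inter> rotate_about (p m) \<alpha> (lab m) = {}"
    proof (rule ccontr)
      assume "\<not> ?thesis"
      then have c: "in_conflict p lab i m \<alpha>" using im by (simp add: in_conflict_def)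
      obtain j where j: "j < N" "\<alpha> = E!j \<or> \<alpha> \<in> I j" using locate_ev[of \<alpha>] a by auto
      show False
      proof (cases "\<alpha> \<in> I j")
        case True
        then have "x i j = 1" "x m j = 1" using corr j im by auto
        moreover have "conflict_during n p lab i m j"
          using True c unfolding conflict_during_def I_def by auto
        ultimately show False using F im j by fastforce
      next
        case False
        then have ae: "\<alpha> = E!j" using j by auto
        then have "x i j = 1" "x i (prv j) = 1" "x m j = 1" "x m (prv j) = 1"
          using phiev j im by auto
        moreover have "conflict_during n p lab i m j \<or> conflict_during n p lab i m (prv j)"
          using conflict_event[of i m j] pos im j c ae by (simp add: prv_def)
        ultimately show False using F im j prvN[OF j(1)] by fastforce
      qed
    qed
  qed
  define A where "A i = {\<alpha> \<in> {0..<2*pi}. \<phi> i \<alpha>}" for i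
  have AR: "active_ranges \<phi> i = components (cis ` A i)" for i
    by (simp add: active_ranges_def A_def)
  have comps: "finite (components (cis ` A i)) \<and> card (components (cis ` A i)) \<le> k" if i: "i < n" for i
  proof (cases "\<forall>j<N. x i j = 1")
    case True
    have "A i = {0..<2*pi}"
    proof (intro set_eqI iffI)
      fix t assume "t \<in> {0..<2*pi}"
      then obtain j where j: "j < N" "t = E!j \<or> t \<in> I j" using locate_ev[of t] by auto
      then have "\<phi> i t" using True corr phiev prvN by auto
      then show "t \<in> A i" using \<open>t \<in> {0..<2*pi}\<close> by (simp add: A_def)
    qed (simp add: A_def)
    then have "cis ` A i = sphere 0 1" using cis_sphere by simp
    moreover have "components (sphere (0::complex) 1) = {sphere 0 1}"
      by (subst components_eq_sing_iff) (auto intro!: connected_sphere)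
    ultimately show ?thesis using k1 by simp
  next
    case notall: False
    show ?thesis
    proof (cases "\<forall>j<N. x i j \<noteq> 1")
      case True
      then have "A i = {}" using corr phiev locate_ev by (auto simp: A_def \<phi>_def)
      then show ?thesis by simp
    next
      case False
      then obtain j1 where j1: "j1 < N" "x i j1 = 1" by auto
      from notall obtain j0 where j0: "j0 < N" "x i j0 = 0" using bin[OF i] by blast
      define R where "R = {j. j < N \<and> x i j = 1 \<and> x i (prv j) = 0}"
      have finR: "finite R" by (simp add: R_def)
      have cardR: "card R \<le> k"
      proof -
        have "int (card R) = (\<Sum>j\<in>R. (1::int))" by simp
        also have "\<dots> = (\<Sum>j\<in>R. b i j)"
        proof (rule sum.cong[OF refl])
          fix j assume j: "j \<in> R"
          then have jN: "j < N" by (simp add: R_def)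
          have "\<forall>i<n. \<forall>j<N. x i j - b i j \<le> x i (prv j)" using F by blast
          then have "x i j - b i j \<le> x i (prv j)" using i jN by blast
          then show "1 = b i j" using j bin[OF i, of j] by (auto simp: R_def)
        qed
        also have "\<dots> \<le> (\<Sum>j<N. b i j)"
        proof (rule sum_mono2)
          show "R \<subseteq> {..<N}" by (auto simp: R_def)
          fix j assume "j \<in> {..<N} - R"
          then have "b i j = 0 \<or> b i j = 1" using bin[OF i, of j] by auto
          then show "0 \<le> b i j" by auto
        qed simp
        also have "\<dots> \<le> int k" using F i by blast
        finally show ?thesis by simp
      qed
      define Good where "Good s lm \<longleftrightarrow> E!s < lm \<and> cis ` {E!s<..lm} \<subseteq> cis ` A i" for s lm
      have inA: "t \<in> A i" if "0 \<le> t" "t < 2*pi" "\<phi> i t" for t using that by (simp add: A_def)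
      have NW: "Good s \<alpha>" if s: "s \<le> j" "j < N" "\<forall>t. s \<le> t \<and> t \<le> j \<longrightarrow> x i t = 1" "x i (prv s) = 0"
        and al: "E!j \<le> \<alpha>" "\<alpha> < E!(j+1)" "\<alpha> = E!j \<longrightarrow> x i (prv j) = 1" for s j \<alpha>
      proof -
        have sl: "E!s < \<alpha>"
        proof (cases "s = j")
          case True
          then have "\<alpha> \<noteq> E!j" using al s by auto
          then show ?thesis using al True by auto
        next
          case False
          then show ?thesis using E_mono[of s j] s al by auto
        qed
        have "{E!s<..\<alpha>} \<subseteq> A i"
        proof
          fix t assume t: "t \<in> {E!s<..\<alpha>}"
          have t0: "0 \<le> t" "t < 2*pi"
            using t E_range[of s] E_range[of "j+1"] s al by auto
          then obtain j' where j': "j' < N" "t = E!j' \<or> t \<in> I j'" using locate_ev by blast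
          show "t \<in> A i"
          proof (cases "t \<in> I j'")
            case True
            have "s < j' + 1"
              using True t E_mono_iff[of s "j'+1"] j' s by (auto simp: I_def)
            moreover have "j' < j + 1"
              using True t al E_mono_iff[of j' "j+1"] j' s by (auto simp: I_def)
            ultimately have "x i j' = 1" using s by auto
            then show ?thesis using corr[OF j'(1) True] inA t0 by blast
          next
            case False
            then have te: "t = E!j'" using j' by auto
            have sj: "s < j'" using t te E_mono_iff[of s j'] j' s by auto
            moreover have jj: "j' < j + 1" using t te al E_mono_iff[of j' "j+1"] j' s by auto
            ultimately have r1: "s \<le> j' \<and> j' \<le> j" "s \<le> j' - 1 \<and> j' - 1 \<le> j" by auto
            have "x i j' = 1" "x i (j' - 1) = 1"
              using s(3)[rule_format, OF r1(1)] s(3)[rule_format, OF r1(2)] by auto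
            moreover have "prv j' = j' - 1" using prv1[of j'] j' sj by auto
            ultimately have "x i j' = 1" "x i (prv j') = 1" by auto
            then show ?thesis using phiev[OF j'(1)] te inA t0 by blast
          qed
        qed
        then show ?thesis using sl by (auto simp: Good_def)
      qed
      have WR: "Good s (\<alpha> + 2*pi)" if s: "j < s" "s < N" "\<forall>t. s \<le> t \<and> t < N \<longrightarrow> x i t = 1"
          "\<forall>t. t \<le> j \<longrightarrow> x i t = 1"
        and al: "E!j \<le> \<alpha>" "\<alpha> < E!(j+1)" for s j \<alpha>
      proof -
        have jN: "j < N" using s by simp
        have Es: "E!s < 2*pi" using E_mono[of s N] s EN by simp
        have a0: "0 \<le> \<alpha>" using E_range[of j] jN al by auto
        have aE: "\<alpha> < 2*pi" using E_range[of "j+1"] jN al by auto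
        have sl: "E!s < \<alpha> + 2*pi" using Es a0 by simp
        have "cis ` {E!s<..\<alpha> + 2*pi} \<subseteq> cis ` A i"
        proof
          fix z assume "z \<in> cis ` {E!s<..\<alpha> + 2*pi}"
          then obtain t where t: "t \<in> {E!s<..\<alpha> + 2*pi}" "z = cis t" by auto
          consider "t < 2*pi" | "t = 2*pi" | "t > 2*pi" by linarith
          then show "z \<in> cis ` A i"
          proof cases
            case 1
            have t0: "0 \<le> t" using t E_range[of s] s by auto
            obtain j' where j': "j' < N" "t = E!j' \<or> t \<in> I j'" using locate_ev t0 1 by blast
            have "t \<in> A i"
            proof (cases "t \<in> I j'")
              case True
              have "s < j' + 1"
                using True t E_mono_iff[of s "j'+1"] j' s by (auto simp: I_def)
              then have "x i j' = 1" using s j' by auto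
              then show ?thesis using corr[OF j'(1) True] inA t0 1 by blast
            next
              case False
              then have te: "t = E!j'" using j' by auto
              have sj: "s < j'" using t te E_mono_iff[of s j'] j' s by auto
              then have r1: "s \<le> j' \<and> j' < N" "s \<le> j' - 1 \<and> j' - 1 < N" using j' by auto
              have "x i j' = 1" "x i (j' - 1) = 1"
                using s(3)[rule_format, OF r1(1)] s(3)[rule_format, OF r1(2)] by auto
              moreover have "prv j' = j' - 1" using prv1[of j'] j' sj by auto
              ultimately have "x i j' = 1" "x i (prv j') = 1" by auto
              then show ?thesis using phiev[OF j'(1)] te inA t0 1 by blast
            qed
            then show ?thesis using t by auto
          next
            case 2
            have "x i 0 = 1" "x i (prv 0) = 1" using s prv0 N_pos by auto
            then have "\<phi> i (E!0)" using phiev[of 0] N_pos by auto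
            then have "0 \<in> A i" using inA[of 0] E0 by simp
            moreover have "z = cis 0" using t 2 by (simp add: cis_2pi_shift[of 0, symmetric])
            ultimately show ?thesis by blast
          next
            case 3
            define t' where "t' = t - 2*pi"
            have t': "0 < t'" "t' \<le> \<alpha>" using 3 t by (auto simp: t'_def)
            obtain j' where j': "j' < N" "t' = E!j' \<or> t' \<in> I j'" using locate_ev[of t'] t' aE by auto
            have "t' \<in> A i"
            proof (cases "t' \<in> I j'")
              case True
              have "j' < j + 1"
                using True t' al E_mono_iff[of j' "j+1"] j' jN by (auto simp: I_def)
              then have "x i j' = 1" using s by auto
              then show ?thesis using corr[OF j'(1) True] inA t' aE by auto
            next
              case False
              then have te: "t' = E!j'" using j' by auto
              have j0': "0 < j'" using t' te E0 by (cases j') auto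
              moreover have "j' < j + 1" using t' te al E_mono_iff[of j' "j+1"] j' jN by auto
              ultimately have r1: "j' \<le> j" "j' - 1 \<le> j" by auto
              have "x i j' = 1" "x i (j' - 1) = 1"
                using s(4)[rule_format, OF r1(1)] s(4)[rule_format, OF r1(2)] by auto
              moreover have "prv j' = j' - 1" using prv1[of j'] j' j0' by auto
              ultimately have "x i j' = 1" "x i (prv j') = 1" by auto
              then show ?thesis using phiev[OF j'(1)] te inA t' aE by auto
            qed
            moreover have "z = cis t'" using t by (simp add: t'_def cis_2pi_shift')
            ultimately show ?thesis by blast
          qed
        qed
        then show ?thesis using sl by (simp add: Good_def)
      qed
      have key: "\<exists>s\<in>R. \<exists>lm. Good s lm \<and> cis lm = cis \<alpha>" if aA: "\<alpha> \<in> A i" for \<alpha>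
      proof -
        have a0: "0 \<le> \<alpha>" "\<alpha> < 2*pi" "\<phi> i \<alpha>" using aA by (auto simp: A_def)
        obtain j where j: "j < N" "\<alpha> = E!j \<or> \<alpha> \<in> I j" using locate_ev a0 by blast
        have xjxe: "x i j = 1 \<and> (\<alpha> = E!j \<longrightarrow> x i (prv j) = 1)"
        proof (cases "\<alpha> \<in> I j")
          case True
          then have "\<alpha> \<noteq> E!j" using ev_notin_I[of j j] j by auto
          then show ?thesis using corr[OF j(1) True] a0 by auto
        next
          case False
          then have "\<alpha> = E!j" using j by auto
          then show ?thesis using phiev[OF j(1)] a0 by auto
        qed
        then have xj: "x i j = 1" and xe: "\<alpha> = E!j \<longrightarrow> x i (prv j) = 1" by auto
        have al: "E!j \<le> \<alpha>" "\<alpha> < E!(j+1)" using j E_mono[of j "j+1"] by (auto simp: I_def)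
        show ?thesis
        proof (cases "\<exists>z<j. x i z = 0")
          case True
          define G where "G = Max {z. z < j \<and> x i z = 0}"
          have fG: "finite {z. z < j \<and> x i z = 0}" by simp
          have G: "G < j" "x i G = 0" using Max_in[OF fG] True by (auto simp: G_def)
          have Gmax: "z \<le> G" if "z < j" "x i z = 0" for z using Max_ge[OF fG] that by (auto simp: G_def)
          have ones: "\<forall>t. G + 1 \<le> t \<and> t \<le> j \<longrightarrow> x i t = 1"
          proof (intro allI impI)
            fix t assume t: "G + 1 \<le> t \<and> t \<le> j"
            show "x i t = 1"
            proof (cases "t = j")
              case False
              then have "x i t \<noteq> 0" using Gmax[of t] t by auto
              then show ?thesis using bin[OF i, of t] t j by auto
            qed (simp add: xj)
          qed
          have ps: "prv (G+1) = G" using prv1[of "G+1"] G j by simp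
          have sR: "G + 1 \<in> R" using ones G ps j by (auto simp: R_def)
          have "Good (G+1) \<alpha>" using NW[of "G+1" j \<alpha>] G ones ps j al xe by auto
          then show ?thesis using sR by blast
        next
          case False
          then have low: "\<forall>t. t \<le> j \<longrightarrow> x i t = 1"
            using bin[OF i] j xj by (metis le_neq_implies_less order.strict_trans2 nat_less_le)
          define G where "G = Max {z. z < N \<and> x i z = 0}"
          have fG: "finite {z. z < N \<and> x i z = 0}" by simp
          have "G \<in> {z. z < N \<and> x i z = 0}" unfolding G_def using fG j0 by (intro Max_in) auto
          then have G: "G < N" "x i G = 0" by auto
          have Gmax: "z \<le> G" if "z < N" "x i z = 0" for z using Max_ge[OF fG] that by (auto simp: G_def)
          have jG: "j < G" using low G by (metis not_le zero_neq_one)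
          show ?thesis
          proof (cases "G = N - 1")
            case True
            have ps: "prv 0 = G" using prv0 True by simp
            have sR: "0 \<in> R" using low G ps N_pos by (auto simp: R_def)
            have "Good 0 \<alpha>" using NW[of 0 j \<alpha>] low ps G j al xe by auto
            then show ?thesis using sR by blast
          next
            case False
            then have GN: "G + 1 < N" using G by simp
            have high: "\<forall>t. G + 1 \<le> t \<and> t < N \<longrightarrow> x i t = 1"
            proof (intro allI impI)
              fix t assume t: "G + 1 \<le> t \<and> t < N"
              then have "x i t \<noteq> 0" using Gmax[of t] by auto
              then show "x i t = 1" using bin[OF i, of t] t by auto
            qed
            have ps: "prv (G+1) = G" using prv1[of "G+1"] GN by simp
            have sR: "G + 1 \<in> R" using high GN G ps by (auto simp: R_def)
            have "Good (G+1) (\<alpha> + 2*pi)" using WR[of j "G+1" \<alpha>] jG GN high low al by auto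
            moreover have "cis (\<alpha> + 2*pi) = cis \<alpha>" by (rule cis_2pi_shift)
            ultimately show ?thesis using sR by blast
          qed
        qed
      qed
      define g where "g C = (SOME s. s \<in> R \<and> (\<exists>lm. Good s lm \<and> cis lm \<in> C))" for C
      have gC: "g C \<in> R \<and> (\<exists>lm. Good (g C) lm \<and> cis lm \<in> C)" if C: "C \<in> components (cis ` A i)" for C
      proof -
        obtain z where z: "z \<in> C" using in_components_nonempty[OF C] by blast
        then have "z \<in> cis ` A i" using in_components_subset[OF C] by blast
        then obtain \<alpha> where "\<alpha> \<in> A i" "z = cis \<alpha>" by blast
        then obtain s lm where "s \<in> R" "Good s lm" "cis lm = z" using key by metis
        then have "\<exists>s. s \<in> R \<and> (\<exists>lm. Good s lm \<and> cis lm \<in> C)" using z by blast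
        then show ?thesis unfolding g_def by (rule someI_ex)
      qed
      have inj: "inj_on g (components (cis ` A i))"
      proof (rule inj_onI)
        fix C1 C2 assume C: "C1 \<in> components (cis ` A i)" "C2 \<in> components (cis ` A i)" "g C1 = g C2"
        obtain lm1 where l1: "Good (g C1) lm1" "cis lm1 \<in> C1" using gC[OF C(1)] by blast
        obtain lm2 where l2: "Good (g C1) lm2" "cis lm2 \<in> C2" using gC[OF C(2)] C(3) by auto
        define T where "T = cis ` {E!(g C1)<..max lm1 lm2}"
        have "Good (g C1) (max lm1 lm2)" using l1 l2 by (simp add: max_def)
        then have TA: "T \<subseteq> cis ` A i" by (simp add: T_def Good_def)
        have Tc: "connected T" unfolding T_def
          by (intro connected_continuous_image continuous_intros) simp
        have "cis lm1 \<in> T" "cis lm2 \<in> T" using l1 l2 by (auto simp: T_def Good_def)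
        then have "T \<subseteq> C1" "T \<subseteq> C2"
          using components_maximal[OF C(1) Tc TA] components_maximal[OF C(2) Tc TA] l1 l2 by blast+
        then have "C1 \<inter> C2 \<noteq> {}" using \<open>cis lm1 \<in> T\<close> by blast
        then show "C1 = C2" using components_nonoverlap[OF C(1) C(2)] by blast
      qed
      have img: "g ` components (cis ` A i) \<subseteq> R" using gC by blast
      have fin: "finite (components (cis ` A i))" using inj_on_finite[OF inj img finR] .
      have "card (components (cis ` A i)) \<le> card R" using card_inj_on_le[OF inj img finR] .
      then show ?thesis using fin cardR by simp
    qed
  qed
  have kR: "kR_feasible n p lab k \<phi>"
    unfolding kR_feasible_def using valid comps AR by simp
  have tot: "total_activity n \<phi> = ilp_objective n p lab x"
  proof -
    have "total_activity n \<phi> = (\<Sum>i<n. measure lebesgue (A i))"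
      unfolding total_activity_def AR
    proof (rule sum.cong[OF refl])
      fix i assume "i \<in> {..<n}"
      have "A i \<subseteq> {0..<2*pi}" by (auto simp: A_def)
      then show "(\<Sum>C\<in>components (cis ` A i). range_length C) = measure lebesgue (A i)"
        using comps \<open>i \<in> {..<n}\<close> comp_sum by auto
    qed
    also have "\<dots> = (\<Sum>i<n. \<Sum>j<N. measure lebesgue (A i \<inter> I j))"
    proof (rule sum.cong[OF refl])
      fix i assume i: "i \<in> {..<n}"
      have "A i \<subseteq> {0..<2*pi}" by (auto simp: A_def)
      moreover have "A i \<in> sets lebesgue" using comps i comp_sum calculation by auto
      ultimately show "measure lebesgue (A i) = (\<Sum>j<N. measure lebesgue (A i \<inter> I j))"
        by (rule measure_split)
    qed
    also have "\<dots> = (\<Sum>i<n. \<Sum>j<N. of_int (x i j) * (E!(j+1) - E!j))"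
    proof (intro sum.cong refl)
      fix i j assume i: "i \<in> {..<n}" and j: "j \<in> {..<N}"
      have "A i \<inter> I j = (if x i j = 1 then I j else {})"
        using corr[of j] j I_sub[of j] by (auto simp: A_def)
      then show "measure lebesgue (A i \<inter> I j) = of_int (x i j) * (E!(j+1) - E!j)"
        using bin[of i j] i j I_L[of j] by auto
    qed
    finally show ?thesis by (simp add: ilp_objective_def)
  qed
  show ?thesis
  proof (intro exI[of _ \<phi>] conjI kR tot allI impI)
    fix i j \<alpha> assume "i < n" "j < N" "E!j < \<alpha> \<and> \<alpha> < E!(j+1)"
    then show "\<phi> i \<alpha> = (x i j = 1)" using corr[of j \<alpha> i] by (auto simp: I_def)
  qed
qed

end


context inst begin

lemma N_le: "N \<le> card Ev + 1"
proof -
  have "card ES \<le> card Ev + 2" unfolding ES_def using fin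
    by (simp add: card_insert_if)
  then show ?thesis using N_eq len_E by simp
qed

lemma sizes:
  "ilp_num_variables n p lab \<le> 2 * (card Ev + 1) * n \<and>
   ilp_num_constraints n p lab \<le> 3 * (max_conflicts n p lab + 1) * (card Ev + 1) * n"
proof
  show "ilp_num_variables n p lab \<le> 2 * (card Ev + 1) * n"
  proof -
    have "2 * n * N \<le> 2 * n * (card Ev + 1)" using N_le by (intro mult_le_mono2)
    then show ?thesis unfolding ilp_num_variables_def by (simp add: algebra_simps)
  qed
next
  define c where "c = max_conflicts n p lab"
  define e1 where "e1 = card Ev + 1"
  define M where "M i = {m. m < n \<and> (\<exists>\<alpha>. in_conflict p lab i m \<alpha>)}" for i
  define T where "T = {(i, m, j). i < m \<and> m < n \<and> j < N \<and> conflict_during n p lab i m j}"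
  have Mc: "card (M i) \<le> c" if "i < n" for i
  proof -
    have "card (M i) \<in> insert 0 ((\<lambda>i. card {m. m < n \<and> (\<exists>\<alpha>. in_conflict p lab i m \<alpha>)}) ` {..<n})"
      using that by (auto simp: M_def)
    then show ?thesis unfolding c_def max_conflicts_def by (intro Max_ge) auto
  qed
  have TS: "T \<subseteq> Sigma {..<n} (\<lambda>i. M i \<times> {..<N})"
    unfolding T_def M_def conflict_during_def by auto
  have fS: "finite (Sigma {..<n} (\<lambda>i. M i \<times> {..<N}))"
    by (intro finite_SigmaI finite_cartesian_product) (auto simp: M_def)
  have "card T \<le> card (Sigma {..<n} (\<lambda>i. M i \<times> {..<N}))" using TS fS by (rule card_mono[rotated])
  also have "\<dots> = (\<Sum>i<n. card (M i) * N)"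
    by (subst card_SigmaI) (auto simp: M_def card_cartesian_product)
  also have "\<dots> \<le> (\<Sum>i<n. c * N)" using Mc by (intro sum_mono mult_le_mono1) auto
  also have "\<dots> = n * (c * N)" by simp
  finally have cT: "card T \<le> n * (c * N)" .
  have NE: "N \<le> e1" using N_le by (simp add: e1_def)
  have "ilp_num_constraints n p lab = n * N + n + card T" by (simp add: ilp_num_constraints_def T_def)
  also have "\<dots> \<le> n * e1 + n * e1 + n * (c * e1)"
  proof -
    have "n * N \<le> n * e1" using NE by simp
    moreover have "n \<le> n * e1" by (simp add: e1_def)
    moreover have "n * (c * N) \<le> n * (c * e1)" using NE by simp
    ultimately show ?thesis using cT by linarith
  qed
  also have "\<dots> = (c + 2) * e1 * n" by (simp add: algebra_simps)
  also have "\<dots> \<le> 3 * (c + 1) * e1 * n" by (intro mult_le_mono1) simp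
  finally show "ilp_num_constraints n p lab \<le> 3 * (max_conflicts n p lab + 1) * (card Ev + 1) * n"
    by (simp add: c_def e1_def)
qed

end

theorem theorem3:
  fixes n k :: nat and p :: "nat \<Rightarrow> complex" and lab :: "nat \<Rightarrow> complex set"
    and x b :: "nat \<Rightarrow> nat \<Rightarrow> int"
  assumes inst: "label_instance n p lab"
    and k: "k \<ge> 1"
    and pos_len: "\<forall>i<n. \<forall>m<n. \<forall>C \<in> conflict_ranges p lab i m. emeasure lebesgue C > 0"
    and fin: "finite (conflict_events n p lab)"
    and opt: "ilp_optimal n p lab k x b"
  shows "(\<exists>\<phi>. maxtotal_optimal n p lab k \<phi> \<and>
            (\<forall>i<n. \<forall>j<num_intervals n p lab. \<forall>\<alpha>.
               event_list n p lab ! j < \<alpha> \<and> \<alpha> < event_list n p lab ! (j+1) \<longrightarrow>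
               (\<phi> i \<alpha> \<longleftrightarrow> x i j = 1))) \<and>
         ilp_num_variables n p lab \<le> 2 * (card (conflict_events n p lab) + 1) * n \<and>
         ilp_num_constraints n p lab \<le>
           3 * (max_conflicts n p lab + 1) * (card (conflict_events n p lab) + 1) * n"
proof -
  interpret I: inst n p lab by unfold_locales (rule fin)
  have feas: "ilp_feasible n p lab k x b" using opt by (simp add: ilp_optimal_def)
  obtain \<phi> where \<phi>: "kR_feasible n p lab k \<phi>" "total_activity n \<phi> = ilp_objective n p lab x"
    "\<forall>i<n. \<forall>j<num_intervals n p lab. \<forall>\<alpha>.
               event_list n p lab ! j < \<alpha> \<and> \<alpha> < event_list n p lab ! (j+1) \<longrightarrow>
               (\<phi> i \<alpha> \<longleftrightarrow> x i j = 1)"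
    using I.lower[OF feas pos_len k] by blast
  have "maxtotal_optimal n p lab k \<phi>"
    unfolding maxtotal_optimal_def using \<phi>(1,2) I.upper[OF opt] by simp
  then show ?thesis using \<phi>(3) I.sizes by blast
qed


end
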